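(* Let $\mathcal{A}$ be a complex algebra with a differential calculus $(\Omega(\mathcal{A}),d)$, and let $\mathcal{E}=\Omega^1(\mathcal{A})$, assumed to be a finitely generated projective right $\mathcal{A}$-module. Let $\wedge:\mathcal{E}\otimes_{\mathcal{A}}\mathcal{E}\to\Omega^2(\mathcal{A})$ be the map induced by the product of the calculus. Suppose the short exact sequence of right $\mathcal{A}$-modules $$0\rightarrow \ker(\wedge)\rightarrow \mathcal{E}\otimes_{\mathcal{A}}\mathcal{E}\rightarrow \mathrm{Ran}(\wedge)=\Omega^2(\mathcal{A})$$ splits. Then there exists a torsionless connection $\nabla_0$ on $\mathcal{E}$.
   Context: A differential calculus on a complex algebra $\mathcal{A}$ is a pair $(\Omega(\mathcal{A}),d)$ where $\Omega(\mathcal{A})=\oplus_{j\ge 0}\Omega^j(\mathcal{A})$, $\Omega^0(\mathcal{A})=\mathcal{A}$, each $\Omega^j(\mathcal{A})$ is an $\mathcal{A}$-$\mathcal{A}$-bimodule, there is an $\mathcal{A}$-bimodule map $\wedge:\Omega(\mathcal{A})\otimes_{\mathcal{A}}\Omega(\mathcal{A})\to\Omega(\mathcal{A})$ with $\wedge(\Omega^j\otimes_{\mathcal{A}}\Omega^k)\subseteq\Omega^{j+k}$, and maps $d:\Omega^j(\mathcal{A})\to\Omega^{j+1}(\mathcal{A})$ with $d^2=0$ and $d(\omega\wedge\eta)=d\omega\wedge\eta+(-1)^{\deg\omega}\omega\wedge d\eta$; moreover $\Omega^j(\mathcal{A})$ is the right $\mathcal{A}$-linear span of elements $da_0\wedge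 da_1\wedge\cdots\wedge da_{j-1}$. A (right) connection on $\mathcal{E}=\Omega^1(\mathcal{A})$ is a $\mathbb{C}$-linear map $\nabla:\mathcal{E}\to\mathcal{E}\otimes_{\mathcal{A}}\mathcal{E}$ with $\nabla(\omega a)=\nabla(\omega)a+\omega\otimes_{\mathcal{A}}da$ for all $\omega\in\mathcal{E}$, $a\in\mathcal{A}$. Its torsion is $T_\nabla=\wedge\circ\nabla+d:\mathcal{E}\to\Omega^2(\mathcal{A})$, and $\nabla$ is torsionless if $T_\nabla=0$. *)

theory Defs
  imports Complex_Main
begin

text \<open>A complex algebra: a unital ring 'a together with a unital ring homomorphism
  cemb from the complex numbers into the centre of 'a (scalar z acts as cemb z).\<close>
definition complex_algebra :: "(complex \<Rightarrow> 'a::ring_1) \<Rightarrow> bool" where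
  "complex_algebra cemb \<longleftrightarrow>
     cemb 1 = 1 \<and>
     (\<forall>z w. cemb (z + w) = cemb z + cemb w) \<and>
     (\<forall>z w. cemb (z * w) = cemb z * cemb w) \<and>
     (\<forall>z a. cemb z * a = a * cemb z)"

definition bimodule ::
  "(complex \<Rightarrow> 'a::ring_1) \<Rightarrow> ('a \<Rightarrow> 'm::ab_group_add \<Rightarrow> 'm) \<Rightarrow> ('m \<Rightarrow> 'a \<Rightarrow> 'm) \<Rightarrow> bool" where
  "bimodule cemb lact ract \<longleftrightarrow>
     (\<forall>a b m. lact (a * b) m = lact a (lact b m)) \<and>
     (\<forall>m. lact 1 m = m) \<and>
     (\<forall>a b m. lact (a + b) m = lact a m + lact b m) \<and>
     (\<forall>a m n. lact a (m + n) = lact a m + lact a n) \<and>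
     (\<forall>a b m. ract m (a * b) = ract (ract m a) b) \<and>
     (\<forall>m. ract m 1 = m) \<and>
     (\<forall>a b m. ract m (a + b) = ract m a + ract m b) \<and>
     (\<forall>a m n. ract (m + n) a = ract m a + ract n a) \<and>
     (\<forall>a b m. lact a (ract m b) = ract (lact a m) b) \<and>
     (\<forall>z m. lact (cemb z) m = ract m (cemb z))"

definition sub_bimodule ::
  "('a \<Rightarrow> 'm::ab_group_add \<Rightarrow> 'm) \<Rightarrow> ('m \<Rightarrow> 'a \<Rightarrow> 'm) \<Rightarrow> 'm set \<Rightarrow> bool" where
  "sub_bimodule lact ract M \<longleftrightarrow>
     0 \<in> M \<and> (\<forall>x\<in>M. \<forall>y\<in>M. x + y \<in> M) \<and> (\<forall>x\<in>M. - x \<in> M) \<and>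
     (\<forall>x\<in>M. \<forall>a. lact a x \<in> M) \<and> (\<forall>x\<in>M. \<forall>a. ract x a \<in> M)"

text \<open>The whole of Omega(A) is modelled by one bimodule 'w; deg j is the summand
  Omega^j(A).  iota identifies A with Omega^0(A).  The product wedge is a bimodule map
  Omega(A) \<otimes>_A Omega(A) \<rightarrow> Omega(A), i.e. a biadditive A-balanced map compatible with
  both actions; on Omega^0 = A it is the module action.\<close>
definition diff_calculus ::
  "(complex \<Rightarrow> 'a::ring_1) \<Rightarrow> ('a \<Rightarrow> 'w::ab_group_add \<Rightarrow> 'w) \<Rightarrow> ('w \<Rightarrow> 'a \<Rightarrow> 'w) \<Rightarrow>
   (nat \<Rightarrow> 'w set) \<Rightarrow> ('a \<Rightarrow> 'w) \<Rightarrow> ('w \<Rightarrow> 'w \<Rightarrow> 'w) \<Rightarrow> ('w \<Rightarrow> 'w) \<Rightarrow> bool" where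
  "diff_calculus cemb lw rw deg iota wedge d \<longleftrightarrow>
     complex_algebra cemb \<and>
     bimodule cemb lw rw \<and>
     \<comment> \<open>graded pieces are sub-bimodules and Omega is their direct sum\<close>
     (\<forall>j. sub_bimodule lw rw (deg j)) \<and>
     (\<forall>w. \<exists>f N. (\<forall>j. f j \<in> deg j) \<and> w = (\<Sum>j<N. f j)) \<and>
     (\<forall>f N. (\<forall>j. f j \<in> deg j) \<and> (\<Sum>j<N. f j) = 0 \<longrightarrow> (\<forall>j<N. f j = 0)) \<and>
     \<comment> \<open>Omega^0 = A as bimodules\<close>
     bij_betw iota UNIV (deg 0) \<and>
     (\<forall>a b. iota (a + b) = iota a + iota b) \<and>
     (\<forall>a b. iota (a * b) = lw a (iota b)) \<and>
     (\<forall>a b. iota (a * b) = rw (iota a) b) \<and>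
     \<comment> \<open>the product\<close>
     (\<forall>x y z. wedge (x + y) z = wedge x z + wedge y z) \<and>
     (\<forall>x y z. wedge x (y + z) = wedge x y + wedge x z) \<and>
     (\<forall>x y a. wedge (rw x a) y = wedge x (lw a y)) \<and>
     (\<forall>x y a. wedge (lw a x) y = lw a (wedge x y)) \<and>
     (\<forall>x y a. wedge x (rw y a) = rw (wedge x y) a) \<and>
     (\<forall>j k x y. x \<in> deg j \<longrightarrow> y \<in> deg k \<longrightarrow> wedge x y \<in> deg (j + k)) \<and>
     (\<forall>a w. wedge (iota a) w = lw a w) \<and>
     (\<forall>a w. wedge w (iota a) = rw w a) \<and>
     \<comment> \<open>the differential: complex linear, degree one, d^2 = 0, graded Leibniz rule\<close>
     (\<forall>x y. d (x + y) = d x + d y) \<and>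
     (\<forall>z x. d (rw x (cemb z)) = rw (d x) (cemb z)) \<and>
     (\<forall>j x. x \<in> deg j \<longrightarrow> d x \<in> deg (Suc j)) \<and>
     (\<forall>x. d (d x) = 0) \<and>
     (\<forall>j x y. x \<in> deg j \<longrightarrow>
        d (wedge x y) = wedge (d x) y + (if even j then wedge x (d y) else - wedge x (d y))) \<and>
     \<comment> \<open>Omega^j is the right A-span of the products da_0 \<and> ... \<and> da_(j-1)\<close>
     (\<forall>j. \<forall>w\<in>deg j. \<exists>L :: ('a list \<times> 'a) list.
        (\<forall>p\<in>set L. length (fst p) = j) \<and>
        w = sum_list (map (\<lambda>p. rw (foldr (\<lambda>a acc. wedge (d (iota a)) acc) (fst p) (iota 1)) (snd p)) L))"

text \<open>E (a right A-submodule of 'w) is a direct summand of a free module A^n: there are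
  right-linear maps iE : E \<rightarrow> A^n and pE : A^n \<rightarrow> E with pE o iE = id.  Vectors of A^n are
  functions nat \<Rightarrow> 'a vanishing from n on.\<close>
definition fg_projective_right ::
  "('w::ab_group_add \<Rightarrow> 'a::ring_1 \<Rightarrow> 'w) \<Rightarrow> 'w set \<Rightarrow> bool" where
  "fg_projective_right ract E \<longleftrightarrow>
     (\<exists>(n::nat) (iE :: 'w \<Rightarrow> nat \<Rightarrow> 'a) (pE :: (nat \<Rightarrow> 'a) \<Rightarrow> 'w).
        (\<forall>x\<in>E. \<forall>i\<ge>n. iE x i = 0) \<and>
        (\<forall>x\<in>E. \<forall>y\<in>E. iE (x + y) = (\<lambda>i. iE x i + iE y i)) \<and>
        (\<forall>x\<in>E. \<forall>a. iE (ract x a) = (\<lambda>i. iE x i * a)) \<and>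
        (\<forall>v. (\<forall>i\<ge>n. v i = 0) \<longrightarrow> pE v \<in> E) \<and>
        (\<forall>v u. (\<forall>i\<ge>n. v i = 0) \<longrightarrow> (\<forall>i\<ge>n. u i = 0) \<longrightarrow>
            pE (\<lambda>i. v i + u i) = pE v + pE u) \<and>
        (\<forall>v a. (\<forall>i\<ge>n. v i = 0) \<longrightarrow> pE (\<lambda>i. v i * a) = ract (pE v) a) \<and>
        (\<forall>x\<in>E. pE (iE x) = x))"

inductive_set zspan :: "('b \<Rightarrow> int) set \<Rightarrow> ('b \<Rightarrow> int) set" for S where
  zspan_zero: "(\<lambda>_. 0) \<in> zspan S"
| zspan_gen: "s \<in> S \<Longrightarrow> s \<in> zspan S"
| zspan_add: "f \<in> zspan S \<Longrightarrow> g \<in> zspan S \<Longrightarrow> (\<lambda>q. f q + g q) \<in> zspan S"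
| zspan_neg: "f \<in> zspan S \<Longrightarrow> (\<lambda>q. - f q) \<in> zspan S"

definition delta :: "'b \<Rightarrow> 'b \<Rightarrow> int" where
  "delta b = (\<lambda>q. if q = b then 1 else 0)"

text \<open>Defining relations of M \<otimes>_A N (here M = N = E) in the free abelian group on E \<times> E.\<close>
definition tensor_rels ::
  "('a \<Rightarrow> 'w \<Rightarrow> 'w) \<Rightarrow> ('w::ab_group_add \<Rightarrow> 'a \<Rightarrow> 'w) \<Rightarrow> 'w set \<Rightarrow> ('w \<times> 'w \<Rightarrow> int) set" where
  "tensor_rels lact ract E =
     {(\<lambda>q. delta (x + x', y) q - delta (x, y) q - delta (x', y) q) | x x' y. x \<in> E \<and> x' \<in> E \<and> y \<in> E} \<union>
     {(\<lambda>q. delta (x, y + y') q - delta (x, y) q - delta (x, y') q) | x y y'. x \<in> E \<and> y \<in> E \<and> y' \<in> E} \<union>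
     {(\<lambda>q. delta (ract x a, y) q - delta (x, lact a y) q) | x y a. x \<in> E \<and> y \<in> E}"

definition tensor_lift ::
  "('t::ab_group_add \<Rightarrow> 'a::ring_1 \<Rightarrow> 't) \<Rightarrow> ('w \<Rightarrow> 'w \<Rightarrow> 't) \<Rightarrow> ('w \<times> 'w \<Rightarrow> int) \<Rightarrow> 't" where
  "tensor_lift tact tens f = (\<Sum>q\<in>{q. f q \<noteq> 0}. tact (tens (fst q) (snd q)) (of_int (f q)))"

text \<open>('t, tens) is the tensor product E \<otimes>_A E with its induced A-bimodule structure:
  the canonical map from (free abelian group on E \<times> E) / (relations) to 't is bijective.\<close>
definition is_tensor_product ::
  "(complex \<Rightarrow> 'a::ring_1) \<Rightarrow> ('a \<Rightarrow> 'w::ab_group_add \<Rightarrow> 'w) \<Rightarrow> ('w \<Rightarrow> 'a \<Rightarrow> 'w) \<Rightarrow> 'w set \<Rightarrow>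
   ('a \<Rightarrow> 't::ab_group_add \<Rightarrow> 't) \<Rightarrow> ('t \<Rightarrow> 'a \<Rightarrow> 't) \<Rightarrow> ('w \<Rightarrow> 'w \<Rightarrow> 't) \<Rightarrow> bool" where
  "is_tensor_product cemb lw rw E tlact tact tens \<longleftrightarrow>
     bimodule cemb tlact tact \<and>
     (\<forall>t. \<exists>f. finite {q. f q \<noteq> 0} \<and> {q. f q \<noteq> 0} \<subseteq> E \<times> E \<and> t = tensor_lift tact tens f) \<and>
     (\<forall>f. finite {q. f q \<noteq> 0} \<and> {q. f q \<noteq> 0} \<subseteq> E \<times> E \<longrightarrow>
        (tensor_lift tact tens f = 0 \<longleftrightarrow> f \<in> zspan (tensor_rels lw rw E))) \<and>
     (\<forall>x\<in>E. \<forall>y\<in>E. \<forall>a. tact (tens x y) a = tens x (rw y a)) \<and>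
     (\<forall>x\<in>E. \<forall>y\<in>E. \<forall>a. tlact a (tens x y) = tens (lw a x) y)"

definition induced_wedge ::
  "'w set \<Rightarrow> ('w \<Rightarrow> 'w \<Rightarrow> 't::ab_group_add) \<Rightarrow> ('w \<Rightarrow> 'w \<Rightarrow> 'w::ab_group_add) \<Rightarrow> ('t \<Rightarrow> 'w) \<Rightarrow> bool" where
  "induced_wedge E tens wedge wt \<longleftrightarrow>
     (\<forall>s t. wt (s + t) = wt s + wt t) \<and> (\<forall>x\<in>E. \<forall>y\<in>E. wt (tens x y) = wedge x y)"

text \<open>The sequence 0 \<rightarrow> ker wt \<rightarrow> E \<otimes>_A E \<rightarrow> Omega^2 of right A-modules splits: there is a
  right A-linear section of wt.\<close>
definition right_split ::
  "('w::ab_group_add \<Rightarrow> 'a \<Rightarrow> 'w) \<Rightarrow> ('t::ab_group_add \<Rightarrow> 'a \<Rightarrow> 't) \<Rightarrow> 'w set \<Rightarrow> ('t \<Rightarrow> 'w) \<Rightarrow> bool" where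
  "right_split rw tact Om2 wt \<longleftrightarrow>
     (\<exists>s :: 'w \<Rightarrow> 't.
        (\<forall>x\<in>Om2. \<forall>y\<in>Om2. s (x + y) = s x + s y) \<and>
        (\<forall>x\<in>Om2. \<forall>a. s (rw x a) = tact (s x) a) \<and>
        (\<forall>x\<in>Om2. wt (s x) = x))"

definition connection ::
  "(complex \<Rightarrow> 'a::ring_1) \<Rightarrow> ('w::ab_group_add \<Rightarrow> 'a \<Rightarrow> 'w) \<Rightarrow> 'w set \<Rightarrow> ('a \<Rightarrow> 'w) \<Rightarrow> ('w \<Rightarrow> 'w) \<Rightarrow>
   ('t::ab_group_add \<Rightarrow> 'a \<Rightarrow> 't) \<Rightarrow> ('w \<Rightarrow> 'w \<Rightarrow> 't) \<Rightarrow> ('w \<Rightarrow> 't) \<Rightarrow> bool" where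
  "connection cemb rw E iota d tact tens nabla \<longleftrightarrow>
     (\<forall>x\<in>E. \<forall>y\<in>E. nabla (x + y) = nabla x + nabla y) \<and>
     (\<forall>x\<in>E. \<forall>z. nabla (rw x (cemb z)) = tact (nabla x) (cemb z)) \<and>
     (\<forall>x\<in>E. \<forall>a. nabla (rw x a) = tact (nabla x) a + tens x (d (iota a)))"

definition torsion :: "('w \<Rightarrow> 'w) \<Rightarrow> ('t \<Rightarrow> 'w::ab_group_add) \<Rightarrow> ('w \<Rightarrow> 't) \<Rightarrow> 'w \<Rightarrow> 'w" where
  "torsion d wt nabla x = wt (nabla x) + d x"

definition torsionless :: "'w set \<Rightarrow> ('w \<Rightarrow> 'w) \<Rightarrow> ('t \<Rightarrow> 'w::ab_group_add) \<Rightarrow> ('w \<Rightarrow> 't) \<Rightarrow> bool" where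
  "torsionless E d wt nabla \<longleftrightarrow> (\<forall>x\<in>E. torsion d wt nabla x = 0)"

end

theory Submission
  imports Defs
begin

locale TP =
  fixes cemb :: "complex \<Rightarrow> 'a::ring_1"
    and lw :: "'a \<Rightarrow> 'w::ab_group_add \<Rightarrow> 'w" and rw :: "'w \<Rightarrow> 'a \<Rightarrow> 'w"
    and deg :: "nat \<Rightarrow> 'w set" and iota :: "'a \<Rightarrow> 'w"
    and wedge :: "'w \<Rightarrow> 'w \<Rightarrow> 'w" and d :: "'w \<Rightarrow> 'w"
    and tlact :: "'a \<Rightarrow> 't::ab_group_add \<Rightarrow> 't" and tact :: "'t \<Rightarrow> 'a \<Rightarrow> 't"
    and tens :: "'w \<Rightarrow> 'w \<Rightarrow> 't" and wt :: "'t \<Rightarrow> 'w"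
  assumes DC: "diff_calculus cemb lw rw deg iota wedge d"
    and FP: "fg_projective_right rw (deg 1)"
    and TPr: "is_tensor_product cemb lw rw (deg 1) tlact tact tens"
    and IW: "induced_wedge (deg 1) tens wedge wt"
    and RS: "right_split rw tact (deg 2) wt"
begin

lemma BW: "bimodule cemb lw rw" using DC unfolding diff_calculus_def by (elim conjE) fast
lemma BT: "bimodule cemb tlact tact" using TPr unfolding is_tensor_product_def by blast

lemma rw_addr: "rw m (a + b) = rw m a + rw m b" using BW unfolding bimodule_def by (elim conjE) fast
lemma rw_addl: "rw (m + n) a = rw m a + rw n a" using BW unfolding bimodule_def by (elim conjE) fast
lemma rw_one: "rw m 1 = m" using BW unfolding bimodule_def by (elim conjE) fast
lemma rw_zeror: "rw m 0 = 0" using rw_addr[of m 0 0] by simp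
lemma rw_zerol: "rw 0 a = 0" using rw_addl[of 0 0 a] by simp
lemma rw_neg: "rw (- m) a = - rw m a"
proof -
  have "rw m a + rw (- m) a = 0" using rw_addl[of m "-m" a] rw_zerol by simp
  then show ?thesis by (simp add: add_eq_0_iff)
qed
lemma rw_diff: "rw (m - n) a = rw m a - rw n a" using rw_addl[of m "-n" a] rw_neg by simp
lemma rw_sum: "rw (\<Sum>i\<in>I. f i) a = (\<Sum>i\<in>I. rw (f i) a)"
  by (induction I rule: infinite_finite_induct) (auto simp: rw_zerol rw_addl)

lemma ta_addr: "tact m (a + b) = tact m a + tact m b" using BT unfolding bimodule_def by (elim conjE) fast
lemma ta_addl: "tact (m + n) a = tact m a + tact n a" using BT unfolding bimodule_def by (elim conjE) fast
lemma ta_one: "tact m 1 = m" using BT unfolding bimodule_def by (elim conjE) fast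
lemma ta_zeror: "tact m 0 = 0" using ta_addr[of m 0 0] by simp
lemma ta_zerol: "tact 0 a = 0" using ta_addl[of 0 0 a] by simp
lemma ta_negl: "tact (- m) a = - tact m a"
proof -
  have "tact m a + tact (- m) a = 0" using ta_addl[of m "-m" a] ta_zerol by simp
  then show ?thesis by (simp add: add_eq_0_iff)
qed
lemma ta_diffl: "tact (m - n) a = tact m a - tact n a" using ta_addl[of m "-n" a] ta_negl by simp
lemma ta_negr: "tact m (- a) = - tact m a"
proof -
  have "tact m a + tact m (- a) = 0" using ta_addr[of m a "-a"] ta_zeror by simp
  then show ?thesis by (simp add: add_eq_0_iff)
qed
lemma ta_sum: "tact (\<Sum>i\<in>I. f i) a = (\<Sum>i\<in>I. tact (f i) a)"
  by (induction I rule: infinite_finite_induct) (auto simp: ta_zerol ta_addl)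
lemma ta_of_int_add: "tact m (of_int (k + l)) = tact m (of_int k) + tact m (of_int l)"
  by (simp add: ta_addr)
lemma ta_of_int_neg: "tact m (of_int (- k)) = - tact m (of_int k)"
  by (simp add: ta_negr)

lemma SBall: "\<forall>j. sub_bimodule lw rw (deg j)" using DC unfolding diff_calculus_def by (elim conjE) fast
lemma SB: "sub_bimodule lw rw (deg j)" using SBall by blast
lemma deg_zero: "0 \<in> deg j" using SB unfolding sub_bimodule_def by blast
lemma deg_add: "x \<in> deg j \<Longrightarrow> y \<in> deg j \<Longrightarrow> x + y \<in> deg j" using SB unfolding sub_bimodule_def by blast
lemma deg_neg: "x \<in> deg j \<Longrightarrow> - x \<in> deg j" using SB unfolding sub_bimodule_def by blast
lemma deg_diff: "x \<in> deg j \<Longrightarrow> y \<in> deg j \<Longrightarrow> x - y \<in> deg j" using deg_add deg_neg by (metis diff_conv_add_uminus)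
lemma deg_rw: "x \<in> deg j \<Longrightarrow> rw x a \<in> deg j" using SB unfolding sub_bimodule_def by blast
lemma deg_lw: "x \<in> deg j \<Longrightarrow> lw a x \<in> deg j" using SB unfolding sub_bimodule_def by blast
lemma deg_sum: "(\<And>i. i \<in> I \<Longrightarrow> f i \<in> deg j) \<Longrightarrow> (\<Sum>i\<in>I. f i) \<in> deg j"
  by (induction I rule: infinite_finite_induct) (auto simp: deg_zero deg_add)

lemma iota_deg: "iota a \<in> deg 0" using DC unfolding diff_calculus_def bij_betw_def by (elim conjE) fast
lemma iota_add: "iota (a + b) = iota a + iota b" using DC unfolding diff_calculus_def by (elim conjE) fast
lemma iota_mult_r: "iota (a * b) = rw (iota a) b" using DC unfolding diff_calculus_def by (elim conjE) fast
lemma wedge_iota_r: "wedge w (iota a) = rw w a" using DC unfolding diff_calculus_def by (elim conjE) fast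
lemma wedge_iota_l: "wedge (iota a) w = lw a w" using DC unfolding diff_calculus_def by (elim conjE) fast
lemma wedge_deg: "x \<in> deg j \<Longrightarrow> y \<in> deg k \<Longrightarrow> wedge x y \<in> deg (j + k)" using DC unfolding diff_calculus_def by (elim conjE) fast
lemma wedge_rw: "wedge x (rw y a) = rw (wedge x y) a" using DC unfolding diff_calculus_def by (elim conjE) fast
lemma d_add: "d (x + y) = d x + d y" using DC unfolding diff_calculus_def by (elim conjE) fast
lemma d_deg: "x \<in> deg j \<Longrightarrow> d x \<in> deg (Suc j)" using DC unfolding diff_calculus_def by (elim conjE) fast
lemma d_cemb: "d (rw x (cemb z)) = rw (d x) (cemb z)" using DC unfolding diff_calculus_def by (elim conjE) fast
lemma leib: "x \<in> deg j \<Longrightarrow>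
        d (wedge x y) = wedge (d x) y + (if even j then wedge x (d y) else - wedge x (d y))"
  using DC unfolding diff_calculus_def by (elim conjE) fast
lemma lw_one: "lw 1 m = m" using BW unfolding bimodule_def by (elim conjE) fast

lemma diota_deg: "d (iota a) \<in> deg 1" using d_deg[OF iota_deg] by simp

lemma d_iota_mult: "d (iota (b * a)) = rw (d (iota b)) a + lw b (d (iota a))"
proof -
  have "iota (b * a) = wedge (iota b) (iota a)" by (simp add: iota_mult_r wedge_iota_r)
  then show ?thesis using leib[OF iota_deg, of b "iota a"] by (simp add: wedge_iota_r wedge_iota_l)
qed

lemma d_iota_one: "d (iota 1) = 0"
proof -
  have "d (iota 1) = d (iota (1 * 1))" by simp
  also have "\<dots> = d (iota 1) + d (iota 1)" by (simp only: d_iota_mult rw_one lw_one)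
  finally show ?thesis by simp
qed

lemma d_iota_cemb: "d (iota (cemb z)) = 0"
proof -
  have "iota (cemb z) = rw (iota 1) (cemb z)" using iota_mult_r[of 1 "cemb z"] by simp
  then show ?thesis by (simp add: d_cemb d_iota_one rw_zerol)
qed

abbreviation E where "E \<equiv> deg 1"

lemma tens_rw0: "\<forall>x\<in>E. \<forall>y\<in>E. \<forall>a. tact (tens x y) a = tens x (rw y a)"
  using TPr unfolding is_tensor_product_def by (elim conjE) assumption
lemma tens_rw: "x \<in> E \<Longrightarrow> y \<in> E \<Longrightarrow> tact (tens x y) a = tens x (rw y a)"
  using tens_rw0 by blast

lemma lift_zero_iff: "finite {q. f q \<noteq> 0} \<Longrightarrow> {q. f q \<noteq> 0} \<subseteq> E \<times> E \<Longrightarrow>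
    (tensor_lift tact tens f = 0 \<longleftrightarrow> f \<in> zspan (tensor_rels lw rw E))"
proof -
  have "\<forall>f. finite {q. f q \<noteq> 0} \<and> {q. f q \<noteq> 0} \<subseteq> E \<times> E \<longrightarrow>
        (tensor_lift tact tens f = 0 \<longleftrightarrow> f \<in> zspan (tensor_rels lw rw E))"
    using TPr unfolding is_tensor_product_def by (elim conjE) assumption
  then show "finite {q. f q \<noteq> 0} \<Longrightarrow> {q. f q \<noteq> 0} \<subseteq> E \<times> E \<Longrightarrow>
    (tensor_lift tact tens f = 0 \<longleftrightarrow> f \<in> zspan (tensor_rels lw rw E))" by blast
qed

lemma supp_delta: "{q. delta A q \<noteq> 0} = {A}" by (auto simp: delta_def)
lemma supp_neg: "{q. - f q \<noteq> (0::int)} = {q. f q \<noteq> 0}" by auto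
lemma supp_add: "{q. f q + g q \<noteq> (0::int)} \<subseteq> {q. f q \<noteq> 0} \<union> {q. g q \<noteq> 0}" by auto

lemma lift_delta: "tensor_lift tact tens (delta A) = tens (fst A) (snd A)"
  unfolding tensor_lift_def supp_delta by (simp add: delta_def ta_one)

lemma lift_neg: "tensor_lift tact tens (\<lambda>q. - f q) = - tensor_lift tact tens f"
  unfolding tensor_lift_def supp_neg by (simp add: ta_of_int_neg sum_negf del: of_int_minus)

lemma lift_add:
  assumes "finite {q. f q \<noteq> 0}" "finite {q. g q \<noteq> 0}"
  shows "tensor_lift tact tens (\<lambda>q. f q + g q) = tensor_lift tact tens f + tensor_lift tact tens g"
proof -
  let ?S = "{q. f q \<noteq> 0} \<union> {q. g q \<noteq> 0}"
  let ?h = "\<lambda>q n. tact (tens (fst q) (snd q)) (of_int n)"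
  have fS: "finite ?S" using assms by simp
  have "tensor_lift tact tens (\<lambda>q. f q + g q) = (\<Sum>q\<in>?S. ?h q (f q + g q))"
    unfolding tensor_lift_def
    by (rule sum.mono_neutral_left[OF fS supp_add]) (auto simp: ta_zeror)
  also have "\<dots> = (\<Sum>q\<in>?S. ?h q (f q)) + (\<Sum>q\<in>?S. ?h q (g q))"
    by (simp add: ta_of_int_add sum.distrib del: of_int_add)
  also have "(\<Sum>q\<in>?S. ?h q (f q)) = tensor_lift tact tens f"
    unfolding tensor_lift_def
    by (rule sum.mono_neutral_right[OF fS]) (auto simp: ta_zeror)
  also have "(\<Sum>q\<in>?S. ?h q (g q)) = tensor_lift tact tens g"
    unfolding tensor_lift_def
    by (rule sum.mono_neutral_right[OF fS]) (auto simp: ta_zeror)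
  finally show ?thesis .
qed


lemma lift2: "tensor_lift tact tens (\<lambda>q. delta A q - delta B q) = tens (fst A) (snd A) - tens (fst B) (snd B)"
proof -
  have e: "(\<lambda>q. delta A q - delta B q) = (\<lambda>q. delta A q + (\<lambda>q. - delta B q) q)" by simp
  have "tensor_lift tact tens (\<lambda>q. delta A q + (\<lambda>q. - delta B q) q) =
      tensor_lift tact tens (delta A) + tensor_lift tact tens (\<lambda>q. - delta B q)"
    by (rule lift_add) (simp_all add: supp_delta supp_neg)
  then show ?thesis unfolding e by (simp add: lift_neg lift_delta)
qed

lemma lift3: "tensor_lift tact tens (\<lambda>q. delta A q - delta B q - delta C q) =
   tens (fst A) (snd A) - tens (fst B) (snd B) - tens (fst C) (snd C)"
proof -
  have e: "(\<lambda>q. delta A q - delta B q - delta C q) = (\<lambda>q. (\<lambda>q. delta A q + (\<lambda>q. - delta B q) q) q + (\<lambda>q. - delta C q) q)" by simp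
  have f1: "finite {q. delta A q + - delta B q \<noteq> 0}"
    by (rule finite_subset[OF supp_add]) (simp add: supp_delta supp_neg)
  have "tensor_lift tact tens (\<lambda>q. (\<lambda>q. delta A q + (\<lambda>q. - delta B q) q) q + (\<lambda>q. - delta C q) q)
     = tensor_lift tact tens (\<lambda>q. delta A q + (\<lambda>q. - delta B q) q) + tensor_lift tact tens (\<lambda>q. - delta C q)"
    by (rule lift_add) (use f1 in \<open>simp_all add: supp_delta supp_neg\<close>)
  also have "tensor_lift tact tens (\<lambda>q. delta A q + (\<lambda>q. - delta B q) q) =
      tensor_lift tact tens (delta A) + tensor_lift tact tens (\<lambda>q. - delta B q)"
    by (rule lift_add) (simp_all add: supp_delta supp_neg)
  finally show ?thesis unfolding e by (simp add: lift_neg lift_delta)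
qed

lemma lift_rel0: "f \<in> tensor_rels lw rw E \<Longrightarrow> {q. f q \<noteq> 0} \<subseteq> S \<Longrightarrow> finite S \<Longrightarrow> S \<subseteq> E \<times> E
   \<Longrightarrow> tensor_lift tact tens f = 0"
  using lift_zero_iff[of f] finite_subset[of "{q. f q \<noteq> 0}" S] zspan.zspan_gen[of f] by blast

lemma tens_add1: assumes "x \<in> E" "x' \<in> E" "y \<in> E"
  shows "tens (x + x') y = tens x y + tens x' y"
proof -
  let ?f = "\<lambda>q. delta (x + x', y) q - delta (x, y) q - delta (x', y) q"
  have "?f \<in> tensor_rels lw rw E" unfolding tensor_rels_def using assms by blast
  moreover have "{q. ?f q \<noteq> 0} \<subseteq> {(x + x', y), (x, y), (x', y)}" by (auto simp: delta_def)
  ultimately have "tensor_lift tact tens ?f = 0"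
    by (rule lift_rel0) (use assms deg_add in auto)
  then show ?thesis unfolding lift3 by (simp add: algebra_simps)
qed

lemma tens_add2: assumes "x \<in> E" "y \<in> E" "y' \<in> E"
  shows "tens x (y + y') = tens x y + tens x y'"
proof -
  let ?f = "\<lambda>q. delta (x, y + y') q - delta (x, y) q - delta (x, y') q"
  have "?f \<in> tensor_rels lw rw E" unfolding tensor_rels_def using assms by blast
  moreover have "{q. ?f q \<noteq> 0} \<subseteq> {(x, y + y'), (x, y), (x, y')}" by (auto simp: delta_def)
  ultimately have "tensor_lift tact tens ?f = 0"
    by (rule lift_rel0) (use assms deg_add in auto)
  then show ?thesis unfolding lift3 by (simp add: algebra_simps)
qed

lemma tens_bal: assumes "x \<in> E" "y \<in> E"
  shows "tens (rw x a) y = tens x (lw a y)"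
proof -
  let ?f = "\<lambda>q. delta (rw x a, y) q - delta (x, lw a y) q"
  have "?f \<in> tensor_rels lw rw E" unfolding tensor_rels_def using assms by blast
  moreover have "{q. ?f q \<noteq> 0} \<subseteq> {(rw x a, y), (x, lw a y)}" by (auto simp: delta_def)
  ultimately have "tensor_lift tact tens ?f = 0"
    by (rule lift_rel0) (use assms deg_rw deg_lw in auto)
  then show ?thesis unfolding lift2 by simp
qed

lemma tens_zero2: "x \<in> E \<Longrightarrow> tens x 0 = 0"
  using tens_add2[of x 0 0] deg_zero by simp

lemma tens_sum1: "(\<And>i. i \<in> I \<Longrightarrow> f i \<in> E) \<Longrightarrow> y \<in> E \<Longrightarrow>
   tens (\<Sum>i\<in>I. f i) y = (\<Sum>i\<in>I. tens (f i) y)"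
proof (induction I rule: infinite_finite_induct)
  case (infinite A) then show ?case using tens_add1[of 0 0 y] deg_zero by simp
next
  case empty then show ?case using tens_add1[of 0 0 y] deg_zero by simp
next
  case (insert i F) then show ?case by (simp add: tens_add1 deg_sum)
qed


lemma wt_add: "wt (s + t) = wt s + wt t" using IW unfolding induced_wedge_def by blast
lemma wt_tens: "x \<in> E \<Longrightarrow> y \<in> E \<Longrightarrow> wt (tens x y) = wedge x y" using IW unfolding induced_wedge_def by blast
lemma wt_zero: "wt 0 = 0" using wt_add[of 0 0] by simp
lemma wt_neg: "wt (- t) = - wt t" using wt_add[of t "-t"] wt_zero by (simp add: add_eq_0_iff)
lemma wt_diff: "wt (s - t) = wt s - wt t" using wt_add[of s "-t"] wt_neg by simp
lemma wt_sum: "wt (\<Sum>i\<in>I. f i) = (\<Sum>i\<in>I. wt (f i))"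
  by (induction I rule: infinite_finite_induct) (auto simp: wt_zero wt_add)

lemma d_rw_E: "x \<in> E \<Longrightarrow> d (rw x a) = rw (d x) a - wedge x (d (iota a))"
proof -
  assume x: "x \<in> E"
  have "rw x a = wedge x (iota a)" by (simp add: wedge_iota_r)
  then show ?thesis using leib[OF x, of "iota a"] by (simp add: wedge_iota_r)
qed

lemma main: "\<exists>nabla0 :: 'w \<Rightarrow> 't.
           connection cemb rw (deg 1) iota d tact tens nabla0 \<and> torsionless (deg 1) d wt nabla0"
proof -
  obtain n :: nat and iE :: "'w \<Rightarrow> nat \<Rightarrow> 'a" and pE :: "(nat \<Rightarrow> 'a) \<Rightarrow> 'w" where
    P1: "\<forall>x\<in>E. \<forall>i\<ge>n. iE x i = 0" and
    P2: "\<forall>x\<in>E. \<forall>y\<in>E. iE (x + y) = (\<lambda>i. iE x i + iE y i)" and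
    P3: "\<forall>x\<in>E. \<forall>a. iE (rw x a) = (\<lambda>i. iE x i * a)" and
    P4: "\<forall>v. (\<forall>i\<ge>n. v i = 0) \<longrightarrow> pE v \<in> E" and
    P5: "\<forall>v u. (\<forall>i\<ge>n. v i = 0) \<longrightarrow> (\<forall>i\<ge>n. u i = 0) \<longrightarrow>
            pE (\<lambda>i. v i + u i) = pE v + pE u" and
    P6: "\<forall>v a. (\<forall>i\<ge>n. v i = 0) \<longrightarrow> pE (\<lambda>i. v i * a) = rw (pE v) a" and
    P7: "\<forall>x\<in>E. pE (iE x) = x"
    using FP unfolding fg_projective_right_def apply (elim exE conjE) by (rule that)
  define e where "e i = pE (\<lambda>k. if k = i then 1 else 0)" for i
  have eE: "e i \<in> E" if "i < n" for i unfolding e_def using P4 that by auto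
  have pE0: "pE (\<lambda>_. 0) = 0" using P5[rule_format, of "\<lambda>_. 0" "\<lambda>_. 0"] by simp
  have gen: "pE (\<lambda>k. if k < m then v k else 0) = (\<Sum>i<m. rw (e i) (v i))" if "m \<le> n" for m v
    using that
  proof (induction m)
    case 0 then show ?case using pE0 by simp
  next
    case (Suc m)
    have eq: "(\<lambda>k. if k < Suc m then v k else 0) =
        (\<lambda>k. (if k < m then v k else 0) + (if k = m then 1 else 0) * v m)" by (auto simp: fun_eq_iff less_Suc_eq)
    have "pE (\<lambda>k. (if k < m then v k else 0) + (if k = m then 1 else 0) * v m) =
        pE (\<lambda>k. if k < m then v k else 0) + pE (\<lambda>k. (if k = m then 1 else 0) * v m)"
      using P5[rule_format, of "\<lambda>k. if k < m then v k else 0" "\<lambda>k. (if k = m then 1 else 0) * v m"] Suc.prems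
      by auto
    moreover have "pE (\<lambda>k. (if k = m then 1 else 0) * v m) = rw (e m) (v m)"
      unfolding e_def using P6[rule_format, of "\<lambda>k. if k = m then 1 else 0" "v m"] Suc.prems by auto
    ultimately show ?case unfolding eq using Suc by simp
  qed
  have decomp: "x = (\<Sum>i<n. rw (e i) (iE x i))" if "x \<in> E" for x
  proof -
    have "(\<lambda>k. if k < n then iE x k else 0) = iE x" using P1 that by (auto simp: fun_eq_iff)
    then show ?thesis using gen[of n "iE x"] P7 that by simp
  qed
  define nab where "nab x = (\<Sum>i<n. tens (e i) (d (iota (iE x i))))" for x
  define T where "T x = wt (nab x) + d x" for x
  obtain s where S1: "\<forall>x\<in>deg 2. \<forall>y\<in>deg 2. s (x + y) = s x + s y" and
     S2: "\<forall>x\<in>deg 2. \<forall>a. s (rw x a) = tact (s x) a" and S3: "\<forall>x\<in>deg 2. wt (s x) = x"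
    using RS unfolding right_split_def apply (elim exE conjE) by (rule that)
  define nab0 where "nab0 x = nab x - s (T x)" for x
  have diota_add: "d (iota (a + b)) = d (iota a) + d (iota b)" for a b by (simp add: iota_add d_add)
  have nab_add: "nab (x + y) = nab x + nab y" if "x \<in> E" "y \<in> E" for x y
  proof -
    have "nab (x + y) = (\<Sum>i<n. tens (e i) (d (iota (iE x i))) + tens (e i) (d (iota (iE y i))))"
      unfolding nab_def using that P2 eE
      by (intro sum.cong refl) (simp add: diota_add tens_add2[OF _ diota_deg diota_deg])
    then show ?thesis unfolding nab_def by (simp add: sum.distrib)
  qed
  have nab_rw: "nab (rw x a) = tact (nab x) a + tens x (d (iota a))" if x: "x \<in> E" for x a
  proof -
    have "nab (rw x a) = (\<Sum>i<n. tens (e i) (rw (d (iota (iE x i))) a + lw (iE x i) (d (iota a))))"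
      unfolding nab_def using P3 x by (simp add: d_iota_mult)
    also have "\<dots> = (\<Sum>i<n. tact (tens (e i) (d (iota (iE x i)))) a + tens (rw (e i) (iE x i)) (d (iota a)))"
    proof (intro sum.cong refl)
      fix i assume "i \<in> {..<n}"
      then have ei: "e i \<in> E" using eE by simp
      have A: "d (iota (iE x i)) \<in> E" "d (iota a) \<in> E" by (rule diota_deg)+
      show "tens (e i) (rw (d (iota (iE x i))) a + lw (iE x i) (d (iota a))) =
         tact (tens (e i) (d (iota (iE x i)))) a + tens (rw (e i) (iE x i)) (d (iota a))"
        using tens_add2[OF ei deg_rw[OF A(1)] deg_lw[OF A(2)]] tens_rw[OF ei A(1)] tens_bal[OF ei A(2)]
        by simp
    qed
    also have "\<dots> = tact (nab x) a + tens (\<Sum>i<n. rw (e i) (iE x i)) (d (iota a))"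
    proof -
      have "tens (\<Sum>i<n. rw (e i) (iE x i)) (d (iota a)) = (\<Sum>i<n. tens (rw (e i) (iE x i)) (d (iota a)))"
        by (rule tens_sum1) (use eE deg_rw diota_deg in auto)
      then show ?thesis unfolding nab_def by (simp add: sum.distrib ta_sum)
    qed
    finally show ?thesis using decomp[OF x] by simp
  qed
  have wt_nab: "wt (nab x) = (\<Sum>i<n. wedge (e i) (d (iota (iE x i))))" for x
    unfolding nab_def wt_sum by (intro sum.cong refl) (simp add: wt_tens[OF eE diota_deg])
  have T_deg: "T x \<in> deg 2" if "x \<in> E" for x
  proof -
    have "wt (nab x) \<in> deg 2" unfolding wt_nab
      by (rule deg_sum) (use eE wedge_deg[of _ 1 _ 1] diota_deg in \<open>auto simp: numeral_2_eq_2\<close>)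
    moreover have "d x \<in> deg 2" using d_deg[OF that] by (simp add: numeral_2_eq_2)
    ultimately show ?thesis unfolding T_def by (rule deg_add)
  qed
  have T_add: "T (x + y) = T x + T y" if "x \<in> E" "y \<in> E" for x y
    unfolding T_def using that by (simp add: nab_add wt_add d_add algebra_simps)
  have wt_tact: "wt (tact (nab x) a) = rw (wt (nab x)) a" for x a
  proof -
    have "wt (tact (nab x) a) = (\<Sum>i<n. wt (tens (e i) (rw (d (iota (iE x i))) a)))"
      unfolding nab_def ta_sum wt_sum by (intro sum.cong refl) (simp add: tens_rw[OF eE diota_deg])
    also have "\<dots> = rw (wt (nab x)) a"
      unfolding wt_nab rw_sum by (intro sum.cong refl) (simp add: wt_tens[OF eE deg_rw[OF diota_deg]] wedge_rw)
    finally show ?thesis .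
  qed
  have T_rw: "T (rw x a) = rw (T x) a" if x: "x \<in> E" for x a
    unfolding T_def using x
    by (simp add: nab_rw wt_add wt_tact wt_tens[OF x diota_deg] d_rw_E rw_addl)
  have conn: "connection cemb rw (deg 1) iota d tact tens nab0"
    unfolding connection_def
  proof (intro conjI ballI allI)
    fix x y assume "x \<in> E" "y \<in> E"
    then show "nab0 (x + y) = nab0 x + nab0 y"
      unfolding nab0_def using S1 T_deg by (simp add: nab_add T_add)
  next
    fix x a assume x: "x \<in> E"
    show "nab0 (rw x a) = tact (nab0 x) a + tens x (d (iota a))"
      unfolding nab0_def using x S2 T_deg by (simp add: nab_rw T_rw ta_diffl)
  next
    fix x z assume x: "x \<in> E"
    have "nab0 (rw x (cemb z)) = tact (nab0 x) (cemb z) + tens x (d (iota (cemb z)))"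
      unfolding nab0_def using x S2 T_deg by (simp add: nab_rw T_rw ta_diffl)
    then show "nab0 (rw x (cemb z)) = tact (nab0 x) (cemb z)"
      using x by (simp add: d_iota_cemb tens_zero2)
  qed
  have tl: "torsionless (deg 1) d wt nab0"
    unfolding torsionless_def torsion_def nab0_def
    using S3 T_deg by (simp add: wt_diff T_def)
  show ?thesis using conn tl by blast
qed

end

theorem theorem3p3:
  fixes cemb :: "complex \<Rightarrow> 'a::ring_1"
    and lw :: "'a \<Rightarrow> 'w::ab_group_add \<Rightarrow> 'w" and rw :: "'w \<Rightarrow> 'a \<Rightarrow> 'w"
    and deg :: "nat \<Rightarrow> 'w set" and iota :: "'a \<Rightarrow> 'w"
    and wedge :: "'w \<Rightarrow> 'w \<Rightarrow> 'w" and d :: "'w \<Rightarrow> 'w"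
    and tlact :: "'a \<Rightarrow> 't::ab_group_add \<Rightarrow> 't" and tact :: "'t \<Rightarrow> 'a \<Rightarrow> 't"
    and tens :: "'w \<Rightarrow> 'w \<Rightarrow> 't" and wt :: "'t \<Rightarrow> 'w"
  assumes "diff_calculus cemb lw rw deg iota wedge d"
    and "fg_projective_right rw (deg 1)"
    and "is_tensor_product cemb lw rw (deg 1) tlact tact tens"
    and "induced_wedge (deg 1) tens wedge wt"
    and "right_split rw tact (deg 2) wt"
  shows "\<exists>nabla0 :: 'w \<Rightarrow> 't.
           connection cemb rw (deg 1) iota d tact tens nabla0 \<and> torsionless (deg 1) d wt nabla0"
  by (rule TP.main[OF TP.intro[OF assms]])

end
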